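(* Let $\mathbf A$ and $\mathbf B$ be independent $d\times d$ random matrices that are both determinant preserving. Then (1) $\mathbf A+\mathbf B$ is determinant preserving, and (2) $\mathbf A\mathbf B$ is determinant preserving.
   Context: A random $d\times d$ matrix $\mathbf A$ is called determinant preserving (d.p.) if $\mathbb E[\det(\mathbf A_{\mathcal I,\mathcal J})]=\det(\mathbb E[\mathbf A_{\mathcal I,\mathcal J}])$ for all $\mathcal I,\mathcal J\subseteq\{1,\dots,d\}$ with $|\mathcal I|=|\mathcal J|$, where $\mathbf A_{\mathcal I,\mathcal J}$ is the submatrix with rows indexed by $\mathcal I$ and columns by $\mathcal J$ (all expectations assumed finite). *)

theory Defs
  imports "HOL-Probability.Probability"
begin

text \<open>Meaningful when card I = card J.\<close>
definition minor_det :: "real^'d::{finite,linorder}^'d::{finite,linorder} \<Rightarrow> ('d::{finite,linorder}) set \<Rightarrow> ('d::{finite,linorder}) set \<Rightarrow> real" where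
  "minor_det X I J =
     (let rs = sorted_list_of_set I; cs = sorted_list_of_set J; k = card I in
      \<Sum>p\<in>{p. p permutes {..<k}}. of_int (sign p) * (\<Prod>i<k. X $ (rs ! i) $ (cs ! p i)))"

definition mat_expectation :: "'w measure \<Rightarrow> ('w \<Rightarrow> real^'d^'d) \<Rightarrow> real^'d^'d" where
  "mat_expectation M A = (\<chi> i j. integral\<^sup>L M (\<lambda>\<omega>. A \<omega> $ i $ j))"

definition det_preserving :: "'w measure \<Rightarrow> ('w \<Rightarrow> real^'d::{finite,linorder}^'d::{finite,linorder}) \<Rightarrow> bool" where
  "det_preserving M A \<longleftrightarrow>
     (\<forall>I J :: 'd set. card I = card J \<longrightarrow>
        integrable M (\<lambda>\<omega>. minor_det (A \<omega>) I J) \<and>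
        integral\<^sup>L M (\<lambda>\<omega>. minor_det (A \<omega>) I J) = minor_det (mat_expectation M A) I J)"

end

theory Submission
  imports Defs
begin


definition sgn2 :: "'b::linorder \<Rightarrow> 'b \<Rightarrow> real" where
  "sgn2 a b = (if a < b then 1 else -1)"

definition prs :: "'a::linorder set \<Rightarrow> ('a \<times> 'a) set" where
  "prs I = {(i,j). i \<in> I \<and> j \<in> I \<and> i < j}"

definition sg :: "'a::linorder set \<Rightarrow> ('a \<Rightarrow> 'b::linorder) \<Rightarrow> real" where
  "sg I f = (\<Prod>p\<in>prs I. sgn2 (f (fst p)) (f (snd p)))"

lemma finite_prs: "finite I \<Longrightarrow> finite (prs I)"
  unfolding prs_def by (rule finite_subset[of _ "I \<times> I"]) auto

lemma sgn2_flip: "a \<noteq> b \<Longrightarrow> sgn2 b a = - sgn2 a b"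
  by (auto simp: sgn2_def)

lemma sgn2_sq: "sgn2 a b * sgn2 a b = 1"
  by (auto simp: sgn2_def)

lemma sg_cong: "(\<And>x. x \<in> I \<Longrightarrow> f x = g x) \<Longrightarrow> sg I f = sg I g"
  unfolding sg_def prs_def by (intro prod.cong) auto

lemma sg_mono: "(\<And>x y. x \<in> I \<Longrightarrow> y \<in> I \<Longrightarrow> x < y \<Longrightarrow> f x < f y) \<Longrightarrow> sg I f = 1"
  unfolding sg_def prs_def by (intro prod.neutral) (auto simp: sgn2_def)

lemma sg_comp:
  assumes fin: "finite I" and g: "inj_on g I" and h: "inj_on h (g ` I)"
  shows "sg I (h \<circ> g) = sg I g * sg (g ` I) h"
proof -
  define \<tau> where "\<tau> a b = sgn2 a b * sgn2 (h a) (h b)" for a b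
  have sym: "\<tau> a b = \<tau> b a" if "a \<in> g ` I" "b \<in> g ` I" "a \<noteq> b" for a b
  proof -
    have "h a \<noteq> h b" using h that by (auto dest: inj_onD)
    thus ?thesis using that sgn2_flip[of a b] sgn2_flip[of "h a" "h b"] by (simp add: \<tau>_def)
  qed
  have 1: "sg I (h \<circ> g) = (\<Prod>p\<in>prs I. sgn2 (g (fst p)) (g (snd p)) * \<tau> (g (fst p)) (g (snd p)))"
    unfolding sg_def \<tau>_def
    by (intro prod.cong refl) (simp add: mult.assoc[symmetric] sgn2_sq)
  define gi where "gi = the_inv_into I g"
  have gi1: "gi (g x) = x" if "x \<in> I" for x using that g by (simp add: gi_def the_inv_into_f_f)
  have gi2: "g (gi y) = y" "gi y \<in> I" if "y \<in> g ` I" for y using that g gi1 by auto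
  have 2: "(\<Prod>p\<in>prs I. \<tau> (g (fst p)) (g (snd p))) = (\<Prod>q\<in>prs (g ` I). \<tau> (fst q) (snd q))"
  proof -
    define \<phi> where "\<phi> p = (min (g (fst p)) (g (snd p)), max (g (fst p)) (g (snd p)))" for p
    define \<psi> where "\<psi> q = (min (gi (fst q)) (gi (snd q)), max (gi (fst q)) (gi (snd q)))" for q
    have A: "\<psi> (\<phi> p) = p \<and> \<phi> p \<in> prs (g ` I) \<and> \<tau> (fst (\<phi> p)) (snd (\<phi> p)) = \<tau> (g (fst p)) (g (snd p))"
      if p: "p \<in> prs I" for p
    proof -
      obtain a b where ab: "p = (a,b)" "a \<in> I" "b \<in> I" "a < b" using p by (auto simp: prs_def)
      have ne: "g a \<noteq> g b" using g ab by (auto dest: inj_onD)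
      show ?thesis
      proof (cases "g a < g b")
        case True thus ?thesis using ab gi1 by (auto simp: \<phi>_def \<psi>_def prs_def min_def max_def)
      next
        case False
        hence "g b < g a" using ne by simp
        thus ?thesis using ab gi1 sym[of "g a" "g b"] ne by (auto simp: \<phi>_def \<psi>_def prs_def min_def max_def)
      qed
    qed
    have B: "\<phi> (\<psi> q) = q \<and> \<psi> q \<in> prs I" if q: "q \<in> prs (g ` I)" for q
    proof -
      obtain a b where ab: "q = (a,b)" "a \<in> g ` I" "b \<in> g ` I" "a < b" using q by (auto simp: prs_def)
      note ga = gi2[OF ab(2)] and gb = gi2[OF ab(3)]
      have ne: "gi a \<noteq> gi b" using ga gb ab(4) by (metis less_irrefl)
      show ?thesis
      proof (cases "gi a < gi b")
        case True thus ?thesis using ab ga gb by (auto simp: \<phi>_def \<psi>_def prs_def min_def max_def)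
      next
        case False
        hence "gi b < gi a" using ne by simp
        thus ?thesis using ab ga gb by (auto simp: \<phi>_def \<psi>_def prs_def min_def max_def)
      qed
    qed
    show ?thesis
      by (rule prod.reindex_bij_witness[of _ \<psi> \<phi>]) (use A B in auto)
  qed
  have 3: "(\<Prod>q\<in>prs (g ` I). \<tau> (fst q) (snd q)) = sg (g ` I) h"
    unfolding sg_def \<tau>_def by (intro prod.cong refl) (auto simp: prs_def sgn2_def)
  show ?thesis using 1 2 3 by (simp add: prod.distrib sg_def)
qed

lemma sg_perm_comp:
  assumes "q permutes A" "finite A" "inj_on t A"
  shows "sg A (t \<circ> q) = sg A q * sg A t"
proof -
  have "q ` A = A" using assms(1) by (rule permutes_image)
  moreover have "inj_on q A" using assms(1) by (meson permutes_inj_on)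
  ultimately show ?thesis using sg_comp[of A q t] assms by simp
qed

lemma sg_adj:
  assumes "Suc x < k"
  shows "sg {..<k} (Transposition.transpose x (Suc x)) = -1"
proof -
  let ?t = "Transposition.transpose x (Suc x)"
  let ?h = "\<lambda>p. sgn2 (?t (fst p)) (?t (snd p))"
  have mem: "(x, Suc x) \<in> prs {..<k}" using assms by (auto simp: prs_def)
  have "sg {..<k} ?t = ?h (x, Suc x) * prod ?h (prs {..<k} - {(x, Suc x)})"
    unfolding sg_def by (rule prod.remove[OF finite_prs mem]) simp
  also have "prod ?h (prs {..<k} - {(x, Suc x)}) = 1"
    by (intro prod.neutral) (auto simp: prs_def sgn2_def Transposition.transpose_def)
  finally show ?thesis by (simp add: sgn2_def)
qed

lemma sg_adjs:
  assumes "\<forall>x\<in>set xs. Suc x < k"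
  shows "sg {..<k} (apply_adj_transps xs) = (-1) ^ length xs"
  using assms
proof (induction xs)
  case Nil
  then show ?case by (simp add: sg_mono)
next
  case (Cons x xs)
  have q: "apply_adj_transps xs permutes {..<k}"
    using Cons.prems by (intro permutes_apply_adj_transps) auto
  have "sg {..<k} (apply_adj_transps (x # xs)) =
        sg {..<k} (Transposition.transpose x (x+1) \<circ> apply_adj_transps xs)" by simp
  also have "\<dots> = sg {..<k} (apply_adj_transps xs) * sg {..<k} (Transposition.transpose x (x+1))"
    by (rule sg_perm_comp[OF q]) auto
  also have "\<dots> = (-1) ^ length (x # xs)" using Cons sg_adj[of x k] by simp
  finally show ?case .
qed

lemma sg_transpose_nat:
  fixes a b k :: nat
  assumes "a < k" "b < k" "a \<noteq> b"
  shows "sg {..<k} (Transposition.transpose a b) = -1"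
proof -
  have *: "sg {..<k} (Transposition.transpose a b) = -1" if "a < b" "b < k" for a b :: nat
  proof -
    have "sg {..<k} (Transposition.transpose a b) = sg {..<k} (apply_adj_transps (adj_transp_seq a b))"
      using that by (simp add: adj_transp_seq_correct)
    also have "\<dots> = (-1) ^ (2 * (b - a) - 1)"
      using that by (subst sg_adjs) (auto simp: set_adj_transp_seq length_adj_transp_seq)
    also have "\<dots> = -1"
    proof -
      have "odd (2 * (b - a) - 1)" using that by presburger
      thus ?thesis by simp
    qed
    finally show ?thesis .
  qed
  show ?thesis
  proof (cases "a < b")
    case True thus ?thesis using * assms by blast
  next
    case False
    hence "b < a" using assms by simp
    thus ?thesis using *[of b a] assms by (simp add: transpose_commute)
  qed
qed

lemma sign_sg:
  fixes k :: nat
  assumes "p permutes {..<k}"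
  shows "of_int (sign p) = sg {..<k} p"
  using assms finite_lessThan[of k]
proof (induction rule: permutes_induct)
  case id
  then show ?case by (simp add: sg_mono)
next
  case (swap a b p)
  have "sg {..<k} (Transposition.transpose a b \<circ> p) = sg {..<k} p * sg {..<k} (Transposition.transpose a b)"
    by (rule sg_perm_comp[OF swap.hyps(4)]) auto
  also have "\<dots> = - sg {..<k} p" using sg_transpose_nat[of a k b] swap.hyps by simp
  moreover have "sign (Transposition.transpose a b \<circ> p) = - sign p"
    using swap.hyps
    by (simp add: sign_compose permutation_swap_id permutes_imp_permutation[OF _ swap.hyps(4)] sign_swap_id)
  ultimately show ?case using swap.IH by (metis of_int_minus)
qed

definition en :: "'a::linorder set \<Rightarrow> nat \<Rightarrow> 'a" where
  "en I i = sorted_list_of_set I ! i"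

definition pos :: "'a::linorder set \<Rightarrow> 'a \<Rightarrow> nat" where
  "pos I = the_inv_into {..<card I} (en I)"

lemma en_bij: "finite I \<Longrightarrow> bij_betw (en I) {..<card I} I"
proof -
  assume fin: "finite I"
  let ?rs = "sorted_list_of_set I"
  have d: "distinct ?rs" and l: "length ?rs = card I" and st: "set ?rs = I" using fin by auto
  have "inj_on (en I) {..<card I}"
    using d l by (auto simp: inj_on_def en_def nth_eq_iff_index_eq)
  moreover have "en I ` {..<card I} = I"
    using l st by (auto simp: en_def set_conv_nth)
  ultimately show ?thesis by (simp add: bij_betw_def)
qed

lemma en_mono: "i < j \<Longrightarrow> j < card I \<Longrightarrow> en I i < en I j"
proof -
  assume "i < j" "j < card I"
  moreover have "card I = length (sorted_list_of_set I)" by simp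
  ultimately show ?thesis unfolding en_def
    using sorted_wrt_nth_less[OF strict_sorted_list_of_set] by metis
qed

lemma en_in: "finite I \<Longrightarrow> i < card I \<Longrightarrow> en I i \<in> I"
  using en_bij bij_betwE by blast

lemma pos_bij: "finite I \<Longrightarrow> bij_betw (pos I) I {..<card I}"
  unfolding pos_def by (rule bij_betw_the_inv_into[OF en_bij])

lemma en_pos: "finite I \<Longrightarrow> x \<in> I \<Longrightarrow> en I (pos I x) = x"
  unfolding pos_def using en_bij
  by (metis bij_betw_def f_the_inv_into_f)

lemma pos_en: "finite I \<Longrightarrow> i < card I \<Longrightarrow> pos I (en I i) = i"
  unfolding pos_def using en_bij
  by (metis bij_betw_def lessThan_iff the_inv_into_f_f)

lemma pos_lt: "finite I \<Longrightarrow> x \<in> I \<Longrightarrow> pos I x < card I"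
  using pos_bij bij_betwE by fastforce

lemma pos_mono: "finite I \<Longrightarrow> x \<in> I \<Longrightarrow> y \<in> I \<Longrightarrow> x < y \<Longrightarrow> pos I x < pos I y"
proof (rule ccontr)
  assume fin: "finite I" and xy: "x \<in> I" "y \<in> I" "x < y" and n: "\<not> pos I x < pos I y"
  show False
  proof (cases "pos I x = pos I y")
    case True
    then show ?thesis using en_pos[OF fin xy(1)] en_pos[OF fin xy(2)] xy(3) by (metis less_irrefl)
  next
    case False
    hence "pos I y < pos I x" using n by simp
    hence "en I (pos I y) < en I (pos I x)" using en_mono pos_lt[OF fin xy(1)] by blast
    then show ?thesis using en_pos[OF fin xy(1)] en_pos[OF fin xy(2)] xy(3) by simp
  qed
qed

lemma sg_transfer:
  assumes fin: "finite I" "finite J" and c: "card J = card I" and q: "q permutes {..<card I}"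
  shows "sg I (en J \<circ> (q \<circ> pos I)) = sg {..<card I} q"
proof -
  have pI: "pos I ` I = {..<card I}" using pos_bij[OF fin(1)] by (simp add: bij_betw_def)
  have injp: "inj_on (pos I) I" using pos_bij[OF fin(1)] by (simp add: bij_betw_def)
  have qI: "q ` {..<card I} = {..<card I}" using q by (rule permutes_image)
  have injq: "inj_on q {..<card I}" using q by (meson permutes_inj_on)
  have img: "(q \<circ> pos I) ` I = {..<card I}" using pI qI by (metis image_comp)
  have inj2: "inj_on (q \<circ> pos I) I" using injp injq pI by (simp add: comp_inj_on)
  have inje: "inj_on (en J) {..<card I}" using en_bij[OF fin(2)] c by (simp add: bij_betw_def)
  have "sg I (en J \<circ> (q \<circ> pos I)) = sg I (q \<circ> pos I) * sg ((q \<circ> pos I) ` I) (en J)"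
    by (rule sg_comp[OF fin(1) inj2]) (subst img, rule inje)
  also have "sg ((q \<circ> pos I) ` I) (en J) = 1"
    unfolding img by (rule sg_mono) (use en_mono[of _ _ J] c in auto)
  also have "sg I (q \<circ> pos I) = sg I (pos I) * sg (pos I ` I) q"
    by (rule sg_comp[OF fin(1) injp]) (simp add: pI injq)
  also have "sg I (pos I) = 1" by (rule sg_mono) (use pos_mono[OF fin(1)] in auto)
  finally show ?thesis using pI by (metis mult_1_left mult_1_right)
qed

lemma sg_transpose:
  assumes fin: "finite I" and ij: "i \<in> I" "j \<in> I" "i \<noteq> j"
  shows "sg I (Transposition.transpose i j) = -1"
proof -
  let ?k = "card I"
  let ?a = "pos I i" and ?b = "pos I j"
  have ab: "?a < ?k" "?b < ?k" "?a \<noteq> ?b"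
    using pos_lt[OF fin] ij en_pos[OF fin] by metis+
  have eq: "x \<in> I \<Longrightarrow> Transposition.transpose i j x = (en I \<circ> (Transposition.transpose ?a ?b \<circ> pos I)) x" for x
    using en_pos[OF fin] pos_lt[OF fin] ij
    by (auto simp: Transposition.transpose_def) (metis)+
  have "sg I (Transposition.transpose i j) = sg I (en I \<circ> (Transposition.transpose ?a ?b \<circ> pos I))"
    by (rule sg_cong) (rule eq)
  also have "\<dots> = sg {..<?k} (Transposition.transpose ?a ?b)"
    by (rule sg_transfer[OF fin fin refl]) (simp add: ab permutes_swap_id)
  also have "\<dots> = -1" by (rule sg_transpose_nat[OF ab])
  finally show ?thesis .
qed

definition BIJ :: "'a set \<Rightarrow> 'b set \<Rightarrow> ('a \<Rightarrow> 'b) set" where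
  "BIJ I J = {f. bij_betw f I J \<and> f \<in> extensional I}"

definition mdet :: "('a::linorder \<Rightarrow> 'b::linorder \<Rightarrow> real) \<Rightarrow> 'a set \<Rightarrow> 'b set \<Rightarrow> real" where
  "mdet F I J = (\<Sum>f\<in>BIJ I J. sg I f * (\<Prod>i\<in>I. F i (f i)))"

lemma minor_eq:
  fixes X :: "real^'d::{finite,linorder}^'d::{finite,linorder}" and I J :: "'d set"
  assumes c: "card I = card J"
  shows "minor_det X I J = mdet (\<lambda>i j. X$i$j) I J"
proof -
  have fI: "finite I" and fJ: "finite J" by auto
  define k where "k = card I"
  define \<Phi> where "\<Phi> p = (\<lambda>x. if x \<in> I then en J (p (pos I x)) else undefined)" for p :: "nat \<Rightarrow> nat"
  define \<Psi> where "\<Psi> f = (\<lambda>i. if i < k then pos J (f (en I i)) else i)" for f :: "'d \<Rightarrow> 'd"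
  have lhs: "minor_det X I J = (\<Sum>p\<in>{p. p permutes {..<k}}. of_int (sign p) * (\<Prod>i<k. X $ en I i $ en J (p i)))"
    by (simp add: minor_det_def en_def Let_def k_def)
  have cJ: "card J = k" using c k_def by simp
  show ?thesis unfolding lhs mdet_def
  proof (rule sum.reindex_bij_witness[of _ \<Psi> \<Phi>])
    fix p assume "p \<in> {p. p permutes {..<k}}"
    hence p: "p permutes {..<k}" by simp
    have pk: "i < k \<Longrightarrow> p i < k" for i using permutes_in_image[OF p, of i] by simp
    have injp: "inj_on p {..<k}" using p by (meson permutes_inj_on)
    show "\<Psi> (\<Phi> p) = p"
    proof
      fix i show "\<Psi> (\<Phi> p) i = p i"
      proof (cases "i < k")
        case True
        thus ?thesis using pk[OF True] en_in[OF fI] pos_en[OF fI] pos_en[OF fJ] cJ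
          by (simp add: \<Psi>_def \<Phi>_def k_def)
      next
        case False
        thus ?thesis using p by (simp add: \<Psi>_def permutes_not_in)
      qed
    qed
    have inj: "inj_on (\<Phi> p) I"
    proof
      fix x y assume xy: "x \<in> I" "y \<in> I" "\<Phi> p x = \<Phi> p y"
      hence "en J (p (pos I x)) = en J (p (pos I y))" by (simp add: \<Phi>_def)
      moreover have "p (pos I x) < card J" "p (pos I y) < card J"
        using pk pos_lt[OF fI] xy cJ k_def by auto
      ultimately have "p (pos I x) = p (pos I y)"
        using en_bij[OF fJ] by (auto simp: bij_betw_def inj_on_def)
      hence "pos I x = pos I y" using injp pos_lt[OF fI] xy k_def by (auto simp: inj_on_def)
      thus "x = y" using en_pos[OF fI] xy by metis
    qed
    have sub: "\<Phi> p ` I \<subseteq> J"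
      using pk pos_lt[OF fI] en_in[OF fJ] cJ k_def by (auto simp: \<Phi>_def)
    have "\<Phi> p ` I = J"
      by (rule card_subset_eq[OF fJ sub]) (simp add: card_image[OF inj] c)
    thus "\<Phi> p \<in> BIJ I J" using inj by (simp add: BIJ_def bij_betw_def \<Phi>_def extensional_def)
    have "sg I (\<Phi> p) = sg I (en J \<circ> (p \<circ> pos I))"
      by (rule sg_cong) (simp add: \<Phi>_def)
    also have "\<dots> = sg {..<k} p"
      unfolding k_def by (rule sg_transfer[OF fI fJ]) (use p c k_def in auto)
    also have "\<dots> = of_int (sign p)" by (rule sign_sg[OF p, symmetric])
    finally have s: "sg I (\<Phi> p) = of_int (sign p)" .
    have "(\<Prod>i\<in>I. X $ i $ \<Phi> p i) = (\<Prod>i<k. X $ en I i $ \<Phi> p (en I i))"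
      using prod.reindex_bij_betw[OF en_bij[OF fI], of "\<lambda>i. X $ i $ \<Phi> p i"] k_def by simp
    also have "\<dots> = (\<Prod>i<k. X $ en I i $ en J (p i))"
      by (intro prod.cong refl) (simp add: \<Phi>_def en_in[OF fI] pos_en[OF fI] k_def)
    finally show "sg I (\<Phi> p) * (\<Prod>i\<in>I. X $ i $ \<Phi> p i) = of_int (sign p) * (\<Prod>i<k. X $ en I i $ en J (p i))"
      using s by simp
  next
    fix f assume "f \<in> BIJ I J"
    hence f: "bij_betw f I J" "f \<in> extensional I" by (auto simp: BIJ_def)
    show "\<Phi> (\<Psi> f) = f"
    proof
      fix x show "\<Phi> (\<Psi> f) x = f x"
      proof (cases "x \<in> I")
        case True
        have "f x \<in> J" using f True bij_betwE by blast
        thus ?thesis using True pos_lt[OF fI] en_pos[OF fI] en_pos[OF fJ] k_def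
          by (simp add: \<Phi>_def \<Psi>_def)
      next
        case False
        thus ?thesis using f(2) by (simp add: \<Phi>_def extensional_def)
      qed
    qed
    have b: "bij_betw (pos J \<circ> (f \<circ> en I)) {..<k} {..<k}"
      using bij_betw_trans[OF bij_betw_trans[OF en_bij[OF fI] f(1)] pos_bij[OF fJ]] cJ k_def by simp
    have "bij_betw (\<Psi> f) {..<k} {..<k}"
      by (rule bij_betw_cong[THEN iffD1, OF _ b]) (simp add: \<Psi>_def)
    thus "\<Psi> f \<in> {p. p permutes {..<k}}"
      by (auto intro!: bij_imp_permutes simp: \<Psi>_def split: if_splits)
  qed
qed



definition rho :: "'a::linorder set \<Rightarrow> 'a set \<Rightarrow> real" where
  "rho I S = (\<Prod>p\<in>S \<times> (I - S). sgn2 (fst p) (snd p))"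

lemma bij_betw_rest:
  assumes f: "bij_betw f I J" and S: "S \<subseteq> I"
  shows "bij_betw f S (f ` S)" "bij_betw f (I - S) (J - f ` S)"
proof -
  show 1: "bij_betw f S (f ` S)" using f S by (meson bij_betw_def bij_betw_subset)
  have "bij_betw f ((I - S) \<union> S) ((J - f ` S) \<union> f ` S)"
  proof -
    have "(I - S) \<union> S = I" using S by auto
    moreover have "(J - f ` S) \<union> f ` S = J" using f S by (auto simp: bij_betw_def)
    ultimately show ?thesis using f by simp
  qed
  thus "bij_betw f (I - S) (J - f ` S)"
    by (rule bij_betw_partition[OF _ 1]) auto
qed

lemma sg_split:
  assumes fin: "finite I" and f: "bij_betw f I J" and S: "S \<subseteq> I"
  shows "sg I f = sg S f * sg (I - S) f * (rho I S * rho J (f ` S))"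
proof -
  let ?h = "\<lambda>p. sgn2 (f (fst p)) (f (snd p))"
  define C where "C = {p \<in> prs I. (fst p \<in> S) \<noteq> (snd p \<in> S)}"
  have finC: "finite C" using finite_prs[OF fin] by (simp add: C_def)
  have finS: "finite S" "finite (I - S)" using fin S finite_subset by auto
  have decomp: "prs I = (prs S \<union> prs (I - S)) \<union> C"
    using S by (auto simp: prs_def C_def)
  have "sg I f = prod ?h (prs S \<union> prs (I - S)) * prod ?h C"
    unfolding sg_def decomp
    by (rule prod.union_disjoint[OF _ finC]) (auto simp: finite_prs finS, auto simp: prs_def C_def)
  also have "prod ?h (prs S \<union> prs (I - S)) = sg S f * sg (I - S) f"
    unfolding sg_def
    by (rule prod.union_disjoint[OF finite_prs[OF finS(1)] finite_prs[OF finS(2)]]) (auto simp: prs_def)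
  also have "prod ?h C = (\<Prod>p\<in>S \<times> (I - S). sgn2 (fst p) (snd p) * sgn2 (f (fst p)) (f (snd p)))"
  proof (rule prod.reindex_bij_witness[of _ "\<lambda>p. (min (fst p) (snd p), max (fst p) (snd p))"
                                            "\<lambda>p. if fst p \<in> S then p else (snd p, fst p)"])
    fix p assume "p \<in> C"
    then obtain a b where ab: "p = (a,b)" "a \<in> I" "b \<in> I" "a < b" "(a \<in> S) \<noteq> (b \<in> S)"
      by (auto simp: C_def prs_def)
    have ne: "f a \<noteq> f b" using f ab by (auto simp: bij_betw_def dest: inj_onD)
    show "(min (fst (if fst p \<in> S then p else (snd p, fst p))) (snd (if fst p \<in> S then p else (snd p, fst p))),
          max (fst (if fst p \<in> S then p else (snd p, fst p))) (snd (if fst p \<in> S then p else (snd p, fst p)))) = p"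
      using ab by auto
    show "(if fst p \<in> S then p else (snd p, fst p)) \<in> S \<times> (I - S)"
      using ab by auto
    show "sgn2 (fst (if fst p \<in> S then p else (snd p, fst p))) (snd (if fst p \<in> S then p else (snd p, fst p))) *
          sgn2 (f (fst (if fst p \<in> S then p else (snd p, fst p)))) (f (snd (if fst p \<in> S then p else (snd p, fst p)))) =
          ?h p"
      using ab ne sgn2_flip[of "f a" "f b"] by (auto simp: sgn2_def)
  next
    fix q assume "q \<in> S \<times> (I - S)"
    then obtain a b where ab: "q = (a,b)" "a \<in> S" "b \<in> I" "b \<notin> S" by auto
    have ne: "a \<noteq> b" using ab by auto
    show "(if fst (min (fst q) (snd q), max (fst q) (snd q)) \<in> S then (min (fst q) (snd q), max (fst q) (snd q))
           else (snd (min (fst q) (snd q), max (fst q) (snd q)), fst (min (fst q) (snd q), max (fst q) (snd q)))) = q"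
      using ab ne by (auto simp: min_def max_def)
    show "(min (fst q) (snd q), max (fst q) (snd q)) \<in> C"
      using ab ne S by (auto simp: C_def prs_def min_def max_def)
  qed
  also have "\<dots> = rho I S * (\<Prod>p\<in>S \<times> (I - S). sgn2 (f (fst p)) (f (snd p)))"
    by (simp add: rho_def prod.distrib)
  also have "(\<Prod>p\<in>S \<times> (I - S). sgn2 (f (fst p)) (f (snd p))) = rho J (f ` S)"
  proof -
    have b: "bij_betw (map_prod f f) (S \<times> (I - S)) (f ` S \<times> (J - f ` S))"
      using bij_betw_rest[OF f S] by (intro bij_betw_map_prod)
    show ?thesis unfolding rho_def
      using prod.reindex_bij_betw[OF b, of "\<lambda>p. sgn2 (fst p) (snd p)"] by (simp add: case_prod_beta)
  qed
  finally show ?thesis by (simp add: mult_ac)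
qed

lemma finite_BIJ: "finite I \<Longrightarrow> finite J \<Longrightarrow> finite (BIJ I J)"
proof -
  assume f: "finite I" "finite J"
  have "BIJ I J \<subseteq> PiE I (\<lambda>_. J)" by (auto simp: BIJ_def bij_betw_def PiE_def Pi_def)
  thus ?thesis by (rule finite_subset) (simp add: finite_PiE f)
qed

lemma BIJ_split:
  assumes fin: "finite I" and S: "S \<subseteq> I" and T: "T \<subseteq> J"
  shows "(\<Sum>f\<in>{f \<in> BIJ I J. f ` S = T}. sg I f * ((\<Prod>i\<in>S. F i (f i)) * (\<Prod>i\<in>I - S. G i (f i))))
       = rho I S * rho J T * mdet F S T * mdet G (I - S) (J - T)"
proof -
  define mg where "mg f1 f2 = (\<lambda>x. if x \<in> S then f1 x else f2 x)" for f1 f2 :: "'a \<Rightarrow> 'b"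
  have finS: "finite S" "finite (I - S)" using fin S finite_subset by auto
  have "rho I S * rho J T * mdet F S T * mdet G (I - S) (J - T) =
        (\<Sum>q\<in>BIJ S T \<times> BIJ (I - S) (J - T). rho I S * rho J T *
           ((sg S (fst q) * (\<Prod>i\<in>S. F i (fst q i))) * (sg (I - S) (snd q) * (\<Prod>i\<in>I - S. G i (snd q i)))))"
  proof -
    have "mdet F S T * mdet G (I - S) (J - T) = (\<Sum>q\<in>BIJ S T \<times> BIJ (I - S) (J - T).
           (sg S (fst q) * (\<Prod>i\<in>S. F i (fst q i))) * (sg (I - S) (snd q) * (\<Prod>i\<in>I - S. G i (snd q i))))"
      unfolding mdet_def sum_product sum.cartesian_product by (simp add: case_prod_beta)
    thus ?thesis by (simp add: sum_distrib_left mult.assoc)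
  qed
  also have "\<dots> = (\<Sum>f\<in>{f \<in> BIJ I J. f ` S = T}. sg I f * ((\<Prod>i\<in>S. F i (f i)) * (\<Prod>i\<in>I - S. G i (f i))))"
  proof (rule sum.reindex_bij_witness[of _ "\<lambda>f. (restrict f S, restrict f (I - S))" "\<lambda>q. mg (fst q) (snd q)"])
    fix q assume q: "q \<in> BIJ S T \<times> BIJ (I - S) (J - T)"
    obtain f1 f2 where q12: "q = (f1, f2)" by force
    have f1: "bij_betw f1 S T" "f1 \<in> extensional S" and f2: "bij_betw f2 (I - S) (J - T)" "f2 \<in> extensional (I - S)"
      using q q12 by (auto simp: BIJ_def)
    show "(restrict (mg (fst q) (snd q)) S, restrict (mg (fst q) (snd q)) (I - S)) = q"
      using f1(2) f2(2) q12 by (auto simp: mg_def restrict_def extensional_def fun_eq_iff)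
    have b: "bij_betw (mg f1 f2) (S \<union> (I - S)) (T \<union> (J - T))"
      unfolding mg_def by (rule bij_betw_disjoint_Un[OF f1(1) f2(1)]) auto
    have "S \<union> (I - S) = I" "T \<union> (J - T) = J" using S T by auto
    hence b': "bij_betw (mg f1 f2) I J" using b by simp
    have img: "mg f1 f2 ` S = T" using f1(1) by (auto simp: mg_def bij_betw_def)
    have ext: "mg f1 f2 \<in> extensional I" using f2(2) S by (auto simp: mg_def extensional_def)
    show "mg (fst q) (snd q) \<in> {f \<in> BIJ I J. f ` S = T}" using b' img ext q12 by (simp add: BIJ_def)
    have "sg I (mg f1 f2) = sg S (mg f1 f2) * sg (I - S) (mg f1 f2) * (rho I S * rho J T)"
      using sg_split[OF fin b' S] img by simp
    also have "sg S (mg f1 f2) = sg S f1" by (rule sg_cong) (simp add: mg_def)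
    also have "sg (I - S) (mg f1 f2) = sg (I - S) f2" by (rule sg_cong) (simp add: mg_def)
    finally have s: "sg I (mg f1 f2) = sg S f1 * sg (I - S) f2 * (rho I S * rho J T)" .
    have p1: "(\<Prod>i\<in>S. F i (mg f1 f2 i)) = (\<Prod>i\<in>S. F i (f1 i))" by (intro prod.cong) (auto simp: mg_def)
    have p2: "(\<Prod>i\<in>I - S. G i (mg f1 f2 i)) = (\<Prod>i\<in>I - S. G i (f2 i))" by (intro prod.cong) (auto simp: mg_def)
    show "sg I (mg (fst q) (snd q)) * ((\<Prod>i\<in>S. F i (mg (fst q) (snd q) i)) * (\<Prod>i\<in>I - S. G i (mg (fst q) (snd q) i))) =
          rho I S * rho J T * (sg S (fst q) * (\<Prod>i\<in>S. F i (fst q i)) * (sg (I - S) (snd q) * (\<Prod>i\<in>I - S. G i (snd q i))))"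
      using s p1 p2 q12 by (simp add: mult_ac)
  next
    fix f assume "f \<in> {f \<in> BIJ I J. f ` S = T}"
    hence f: "bij_betw f I J" "f \<in> extensional I" "f ` S = T" by (auto simp: BIJ_def)
    show "mg (fst (restrict f S, restrict f (I - S))) (snd (restrict f S, restrict f (I - S))) = f"
      using f(2) S by (auto simp: mg_def restrict_def extensional_def fun_eq_iff)
    have r1: "bij_betw f S T" "bij_betw f (I - S) (J - T)" using bij_betw_rest[OF f(1) S] f(3) by auto
    show "(restrict f S, restrict f (I - S)) \<in> BIJ S T \<times> BIJ (I - S) (J - T)"
      using r1 by (auto simp: BIJ_def bij_betw_def inj_on_def)
  qed
  finally show ?thesis by simp
qed

lemma mdet_add:
  fixes F G :: "'a::linorder \<Rightarrow> 'b::linorder \<Rightarrow> real"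
  assumes fin: "finite I" "finite J"
  shows "mdet (\<lambda>i j. F i j + G i j) I J =
    (\<Sum>S\<in>Pow I. \<Sum>T\<in>{T. T \<subseteq> J \<and> card T = card S}. rho I S * rho J T * mdet F S T * mdet G (I - S) (J - T))"
proof -
  have "mdet (\<lambda>i j. F i j + G i j) I J =
        (\<Sum>f\<in>BIJ I J. \<Sum>S\<in>Pow I. sg I f * ((\<Prod>i\<in>S. F i (f i)) * (\<Prod>i\<in>I - S. G i (f i))))"
    unfolding mdet_def by (simp add: prod_add[OF fin(1)] sum_distrib_left)
  also have "\<dots> = (\<Sum>S\<in>Pow I. \<Sum>f\<in>BIJ I J. sg I f * ((\<Prod>i\<in>S. F i (f i)) * (\<Prod>i\<in>I - S. G i (f i))))"
    by (rule sum.swap)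
  also have "\<dots> = (\<Sum>S\<in>Pow I. \<Sum>T\<in>{T. T \<subseteq> J \<and> card T = card S}. rho I S * rho J T * mdet F S T * mdet G (I - S) (J - T))"
  proof (rule sum.cong[OF refl])
    fix S assume "S \<in> Pow I"
    hence S: "S \<subseteq> I" by simp
    have finT: "finite {T. T \<subseteq> J \<and> card T = card S}" using fin(2) by simp
    have img: "(\<lambda>f. f ` S) ` BIJ I J \<subseteq> {T. T \<subseteq> J \<and> card T = card S}"
    proof
      fix T assume "T \<in> (\<lambda>f. f ` S) ` BIJ I J"
      then obtain f where f: "f \<in> BIJ I J" "T = f ` S" by auto
      hence "bij_betw f S T" "T \<subseteq> J" using bij_betw_rest[OF _ S, of f J] S by (auto simp: BIJ_def bij_betw_def)
      thus "T \<in> {T. T \<subseteq> J \<and> card T = card S}" by (simp add: bij_betw_same_card)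
    qed
    have "(\<Sum>f\<in>BIJ I J. sg I f * ((\<Prod>i\<in>S. F i (f i)) * (\<Prod>i\<in>I - S. G i (f i)))) =
          (\<Sum>T\<in>{T. T \<subseteq> J \<and> card T = card S}. \<Sum>f\<in>{f \<in> BIJ I J. f ` S = T}. sg I f * ((\<Prod>i\<in>S. F i (f i)) * (\<Prod>i\<in>I - S. G i (f i))))"
      by (rule sum.group[OF finite_BIJ[OF fin] finT img, symmetric])
    also have "\<dots> = (\<Sum>T\<in>{T. T \<subseteq> J \<and> card T = card S}. rho I S * rho J T * mdet F S T * mdet G (I - S) (J - T))"
      by (intro sum.cong refl BIJ_split[OF fin(1) S]) simp
    finally show "(\<Sum>f\<in>BIJ I J. sg I f * ((\<Prod>i\<in>S. F i (f i)) * (\<Prod>i\<in>I - S. G i (f i)))) = \<dots>" .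
  qed
  finally show ?thesis .
qed



lemma W_noninj:
  fixes G :: "'c \<Rightarrow> 'b::linorder \<Rightarrow> real" and g :: "'a::linorder \<Rightarrow> 'c"
  assumes fin: "finite I" and ni: "\<not> inj_on g I"
  shows "(\<Sum>f\<in>BIJ I J. sg I f * (\<Prod>x\<in>I. G (g x) (f x))) = 0"
proof -
  obtain i j where ij: "i \<in> I" "j \<in> I" "i \<noteq> j" "g i = g j" using ni by (auto simp: inj_on_def)
  define \<tau> where "\<tau> = Transposition.transpose i j"
  have \<tau>bij: "bij_betw \<tau> I I" using ij by (simp add: \<tau>_def permutes_swap_id permutes_imp_bij)
  have \<tau>out: "x \<notin> I \<Longrightarrow> \<tau> x = x" for x using ij by (auto simp: \<tau>_def Transposition.transpose_def)
  have \<tau>\<tau>: "\<tau> (\<tau> x) = x" for x by (simp add: \<tau>_def)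
  have g\<tau>: "g (\<tau> x) = g x" for x using ij by (auto simp: \<tau>_def Transposition.transpose_def)
  have sg\<tau>: "sg I \<tau> = -1" unfolding \<tau>_def by (rule sg_transpose[OF fin ij(1-3)])
  let ?H = "\<lambda>f. sg I f * (\<Prod>x\<in>I. G (g x) (f x))"
  have mem: "f \<circ> \<tau> \<in> BIJ I J" if "f \<in> BIJ I J" for f
    using that bij_betw_trans[OF \<tau>bij] \<tau>out by (auto simp: BIJ_def extensional_def)
  have neg: "?H (f \<circ> \<tau>) = - ?H f" if "f \<in> BIJ I J" for f
  proof -
    have f: "bij_betw f I J" using that by (simp add: BIJ_def)
    have s0: "sg I (f \<circ> \<tau>) = sg I \<tau> * sg (\<tau> ` I) f"
      by (rule sg_comp[OF fin]) (use \<tau>bij f in \<open>auto simp: bij_betw_def\<close>)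
    have ti: "\<tau> ` I = I" using \<tau>bij by (simp add: bij_betw_def)
    have s: "sg I (f \<circ> \<tau>) = - sg I f" unfolding s0 ti sg\<tau> by simp
    have "(\<Prod>x\<in>I. G (g x) ((f \<circ> \<tau>) x)) = (\<Prod>x\<in>I. G (g (\<tau> x)) (f (\<tau> x)))" by (simp add: g\<tau>)
    also have "\<dots> = (\<Prod>x\<in>I. G (g x) (f x))"
      by (rule prod.reindex_bij_betw[OF \<tau>bij])
    finally show ?thesis using s by simp
  qed
  have \<tau>\<tau>f: "f \<circ> \<tau> \<circ> \<tau> = f" for f :: "'a \<Rightarrow> 'b" by (simp add: fun_eq_iff \<tau>\<tau>)
  have "sum ?H (BIJ I J) = sum (\<lambda>f. ?H (f \<circ> \<tau>)) (BIJ I J)"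
    by (rule sum.reindex_bij_witness[of _ "\<lambda>f. f \<circ> \<tau>" "\<lambda>f. f \<circ> \<tau>"])
       (auto simp: mem \<tau>\<tau>f)
  also have "\<dots> = sum (\<lambda>f. - ?H f) (BIJ I J)" by (rule sum.cong[OF refl neg])
  also have "\<dots> = - sum ?H (BIJ I J)" by (rule sum_negf)
  finally show ?thesis by simp
qed

lemma W_inj:
  fixes G :: "'c::linorder \<Rightarrow> 'b::linorder \<Rightarrow> real" and g :: "'a::linorder \<Rightarrow> 'c"
  assumes fin: "finite I" and inj: "inj_on g I"
  shows "(\<Sum>f\<in>BIJ I J. sg I f * (\<Prod>x\<in>I. G (g x) (f x))) = sg I g * mdet G (g ` I) J"
proof -
  define K where "K = g ` I"
  define gi where "gi = the_inv_into I g"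
  have gb: "bij_betw g I K" using inj by (simp add: K_def bij_betw_def)
  have gib: "bij_betw gi K I" unfolding gi_def K_def by (rule bij_betw_the_inv_into) (simp add: gb[unfolded K_def])
  have gig: "x \<in> I \<Longrightarrow> gi (g x) = x" for x using inj by (simp add: gi_def the_inv_into_f_f)
  have ggi: "y \<in> K \<Longrightarrow> g (gi y) = y" for y using inj by (simp add: gi_def K_def f_the_inv_into_f)
  have "sg I g * mdet G K J = (\<Sum>h\<in>BIJ K J. sg I g * sg K h * (\<Prod>k\<in>K. G k (h k)))"
    by (simp add: mdet_def sum_distrib_left mult.assoc)
  also have "\<dots> = (\<Sum>f\<in>BIJ I J. sg I f * (\<Prod>x\<in>I. G (g x) (f x)))"
  proof (rule sum.reindex_bij_witness[of _ "\<lambda>f. restrict (f \<circ> gi) K" "\<lambda>h. restrict (h \<circ> g) I"])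
    fix h assume "h \<in> BIJ K J"
    hence h: "bij_betw h K J" "h \<in> extensional K" by (auto simp: BIJ_def)
    show "restrict (restrict (h \<circ> g) I \<circ> gi) K = h"
      using h(2) gib ggi by (auto simp: fun_eq_iff restrict_def extensional_def bij_betw_def)
    have b: "bij_betw (h \<circ> g) I J" by (rule bij_betw_trans[OF gb h(1)])
    show "restrict (h \<circ> g) I \<in> BIJ I J"
      using b by (auto simp: BIJ_def bij_betw_def inj_on_def)
    have "sg I (restrict (h \<circ> g) I) = sg I (h \<circ> g)" by (rule sg_cong) simp
    also have "\<dots> = sg I g * sg K h"
      unfolding K_def by (rule sg_comp[OF fin inj]) (use h(1) in \<open>simp add: bij_betw_def K_def\<close>)
    finally have s: "sg I (restrict (h \<circ> g) I) = sg I g * sg K h" .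
    have "(\<Prod>x\<in>I. G (g x) (restrict (h \<circ> g) I x)) = (\<Prod>x\<in>I. G (g x) (h (g x)))" by simp
    also have "\<dots> = (\<Prod>k\<in>K. G k (h k))" by (rule prod.reindex_bij_betw[OF gb])
    finally show "sg I (restrict (h \<circ> g) I) * (\<Prod>x\<in>I. G (g x) (restrict (h \<circ> g) I x)) =
                  sg I g * sg K h * (\<Prod>k\<in>K. G k (h k))" using s by simp
  next
    fix f assume "f \<in> BIJ I J"
    hence f: "bij_betw f I J" "f \<in> extensional I" by (auto simp: BIJ_def)
    show "restrict (restrict (f \<circ> gi) K \<circ> g) I = f"
      using f(2) gig gb by (auto simp: fun_eq_iff restrict_def extensional_def bij_betw_def)
    have b: "bij_betw (f \<circ> gi) K J" by (rule bij_betw_trans[OF gib f(1)])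
    show "restrict (f \<circ> gi) K \<in> BIJ K J"
      using b by (auto simp: BIJ_def bij_betw_def inj_on_def)
  qed
  finally show ?thesis by (simp add: K_def)
qed

lemma mdet_mult:
  fixes F :: "'a::linorder \<Rightarrow> 'c::{finite,linorder} \<Rightarrow> real" and G :: "'c \<Rightarrow> 'b::linorder \<Rightarrow> real"
  assumes fin: "finite I"
  shows "mdet (\<lambda>i j. \<Sum>l\<in>UNIV. F i l * G l j) I J = (\<Sum>K\<in>{K. card K = card I}. mdet F I K * mdet G K J)"
proof -
  let ?P = "PiE I (\<lambda>_. UNIV :: 'c set)"
  let ?W = "\<lambda>g. (\<Sum>f\<in>BIJ I J. sg I f * (\<Prod>x\<in>I. G (g x) (f x)))"
  have finP: "finite ?P" by (simp add: finite_PiE fin)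
  have finK: "finite {K :: 'c set. card K = card I}" by (rule finite_subset[of _ UNIV]) auto
  have "mdet (\<lambda>i j. \<Sum>l\<in>UNIV. F i l * G l j) I J =
        (\<Sum>f\<in>BIJ I J. sg I f * (\<Sum>g\<in>?P. \<Prod>x\<in>I. F x (g x) * G (g x) (f x)))"
    unfolding mdet_def by (intro sum.cong refl arg_cong2[where f="(*)"] prod_sum_PiE) (auto simp: fin)
  also have "\<dots> = (\<Sum>f\<in>BIJ I J. \<Sum>g\<in>?P. (\<Prod>x\<in>I. F x (g x)) * (sg I f * (\<Prod>x\<in>I. G (g x) (f x))))"
    by (simp add: sum_distrib_left prod.distrib mult_ac)
  also have "\<dots> = (\<Sum>g\<in>?P. (\<Prod>x\<in>I. F x (g x)) * ?W g)"
    by (subst sum.swap) (simp add: sum_distrib_left)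
  also have "\<dots> = (\<Sum>g\<in>?P. if inj_on g I then (\<Prod>x\<in>I. F x (g x)) * (sg I g * mdet G (g ` I) J) else 0)"
    by (intro sum.cong refl) (simp add: W_inj[OF fin] W_noninj[OF fin])
  also have "\<dots> = (\<Sum>g\<in>{g\<in>?P. inj_on g I}. (\<Prod>x\<in>I. F x (g x)) * (sg I g * mdet G (g ` I) J))"
    by (rule sum.inter_filter[OF finP, symmetric])
  also have "\<dots> = (\<Sum>K\<in>{K. card K = card I}. \<Sum>g\<in>{g\<in>{g\<in>?P. inj_on g I}. g ` I = K}.
                       (\<Prod>x\<in>I. F x (g x)) * (sg I g * mdet G (g ` I) J))"
    by (rule sum.group[symmetric]) (use finP finK in \<open>auto simp: card_image\<close>)
  also have "\<dots> = (\<Sum>K\<in>{K. card K = card I}. mdet F I K * mdet G K J)"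
  proof (rule sum.cong[OF refl])
    fix K :: "'c set"
    have eq: "{g\<in>{g\<in>?P. inj_on g I}. g ` I = K} = BIJ I K"
      by (auto simp: BIJ_def bij_betw_def PiE_def extensional_def)
    have "(\<Sum>g\<in>{g\<in>{g\<in>?P. inj_on g I}. g ` I = K}. (\<Prod>x\<in>I. F x (g x)) * (sg I g * mdet G (g ` I) J))
        = (\<Sum>g\<in>BIJ I K. (sg I g * (\<Prod>x\<in>I. F x (g x))) * mdet G K J)"
      unfolding eq by (intro sum.cong refl) (auto simp: BIJ_def bij_betw_def)
    also have "\<dots> = mdet F I K * mdet G K J" by (simp add: mdet_def sum_distrib_right)
    finally show "(\<Sum>g\<in>{g\<in>{g\<in>?P. inj_on g I}. g ` I = K}. (\<Prod>x\<in>I. F x (g x)) * (sg I g * mdet G (g ` I) J))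
        = mdet F I K * mdet G K J" .
  qed
  finally show ?thesis .
qed



lemma minor_cont: "continuous_on UNIV (\<lambda>x::real^'d::{finite,linorder}^'d::{finite,linorder}. minor_det x I J)"
  unfolding minor_det_def Let_def by (intro continuous_intros)

lemma minor_meas: "(\<lambda>x::real^'d::{finite,linorder}^'d::{finite,linorder}. minor_det x I J) \<in> borel_measurable borel"
  by (rule borel_measurable_continuous_onI[OF minor_cont])

lemma entry_meas: "(\<lambda>x::real^'d^'d. x $ i $ j) \<in> borel_measurable borel"
  by (rule borel_measurable_continuous_onI) (intro continuous_intros)

lemma mdet_single: "mdet F {i} {j} = F i j"
proof -
  have "BIJ {i} {j} = {\<lambda>x. if x = i then j else undefined}"
    by (auto simp: BIJ_def bij_betw_def extensional_def fun_eq_iff)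
  moreover have "sg {i} f = 1" for f :: "'a \<Rightarrow> 'b" by (rule sg_mono) auto
  ultimately show ?thesis by (simp add: mdet_def)
qed

lemma minor_single: "minor_det (X::real^'d::{finite,linorder}^'d::{finite,linorder}) {i} {j} = X $ i $ j"
  by (simp add: minor_eq mdet_single)

lemma (in prob_space) indep_prod:
  fixes A B :: "'a \<Rightarrow> 'v::topological_space" and F G :: "'v \<Rightarrow> real"
  assumes ind: "indep_var borel A borel B"
    and F: "F \<in> borel_measurable borel" and G: "G \<in> borel_measurable borel"
    and iF: "integrable M (\<lambda>\<omega>. F (A \<omega>))" and iG: "integrable M (\<lambda>\<omega>. G (B \<omega>))"
  shows "integrable M (\<lambda>\<omega>. F (A \<omega>) * G (B \<omega>))"
    "(\<integral>\<omega>. F (A \<omega>) * G (B \<omega>) \<partial>M) = (\<integral>\<omega>. F (A \<omega>) \<partial>M) * (\<integral>\<omega>. G (B \<omega>) \<partial>M)"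
proof -
  have "indep_var borel (F \<circ> A) borel (G \<circ> B)"
    by (rule indep_var_compose[OF ind F G])
  hence ind': "indep_var borel (\<lambda>\<omega>. F (A \<omega>)) borel (\<lambda>\<omega>. G (B \<omega>))" by (simp add: o_def)
  show "integrable M (\<lambda>\<omega>. F (A \<omega>) * G (B \<omega>))" by (rule indep_var_integrable[OF ind' iF iG])
  show "(\<integral>\<omega>. F (A \<omega>) * G (B \<omega>) \<partial>M) = (\<integral>\<omega>. F (A \<omega>) \<partial>M) * (\<integral>\<omega>. G (B \<omega>) \<partial>M)"
    by (rule indep_var_lebesgue_integral[OF ind' iF iG])
qed

definition QQ :: "'d set \<Rightarrow> 'd set \<Rightarrow> ('d set \<times> 'd set) set" where
  "QQ I J = Sigma (Pow I) (\<lambda>S. {T. T \<subseteq> J \<and> card T = card S})"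

lemma QQ_finite: "finite (QQ (I::'d::finite set) J)"
  by (rule finite_subset[of _ UNIV]) auto

lemma QQ_cards:
  assumes c: "card I = card J" and q: "q \<in> QQ (I::'d::finite set) J"
  shows "card (fst q) = card (snd q)" "card (I - fst q) = card (J - snd q)"
proof -
  obtain S T where st: "q = (S,T)" "S \<subseteq> I" "T \<subseteq> J" "card T = card S" using q by (auto simp: QQ_def)
  show "card (fst q) = card (snd q)" using st by simp
  have "card (I - S) = card I - card S" using st by (simp add: card_Diff_subset finite_subset)
  moreover have "card (J - T) = card J - card T" using st by (simp add: card_Diff_subset finite_subset)
  ultimately show "card (I - fst q) = card (J - snd q)" using st c by simp
qed

lemma minor_add_expand:
  fixes X Y :: "real^'d::{finite,linorder}^'d::{finite,linorder}"
  assumes c: "card I = card J"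
  shows "minor_det (X + Y) I J = (\<Sum>q\<in>QQ I J. rho I (fst q) * rho J (snd q) *
            (minor_det X (fst q) (snd q) * minor_det Y (I - fst q) (J - snd q)))"
proof -
  have "minor_det (X + Y) I J = mdet (\<lambda>i j. X $ i $ j + Y $ i $ j) I J"
    by (simp add: minor_eq[OF c])
  also have "\<dots> = (\<Sum>S\<in>Pow I. \<Sum>T\<in>{T. T \<subseteq> J \<and> card T = card S}.
       rho I S * rho J T * mdet (\<lambda>i j. X $ i $ j) S T * mdet (\<lambda>i j. Y $ i $ j) (I - S) (J - T))"
    by (rule mdet_add) auto
  also have "\<dots> = (\<Sum>q\<in>QQ I J. rho I (fst q) * rho J (snd q) * mdet (\<lambda>i j. X $ i $ j) (fst q) (snd q)
                      * mdet (\<lambda>i j. Y $ i $ j) (I - fst q) (J - snd q))"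
    unfolding QQ_def by (subst sum.Sigma) (auto simp: case_prod_beta)
  also have "\<dots> = (\<Sum>q\<in>QQ I J. rho I (fst q) * rho J (snd q) *
            (minor_det X (fst q) (snd q) * minor_det Y (I - fst q) (J - snd q)))"
    by (intro sum.cong refl) (simp add: minor_eq QQ_cards[OF c] mult.assoc)
  finally show ?thesis .
qed

lemma minor_mult_expand:
  fixes X Y :: "real^'d::{finite,linorder}^'d::{finite,linorder}"
  assumes c: "card I = card J"
  shows "minor_det (X ** Y) I J = (\<Sum>K\<in>{K. card K = card I}. minor_det X I K * minor_det Y K J)"
proof -
  have "minor_det (X ** Y) I J = mdet (\<lambda>i j. \<Sum>l\<in>UNIV. X $ i $ l * Y $ l $ j) I J"
    by (simp add: minor_eq[OF c] matrix_matrix_mult_def)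
  also have "\<dots> = (\<Sum>K\<in>{K. card K = card I}. mdet (\<lambda>i j. X $ i $ j) I K * mdet (\<lambda>i j. Y $ i $ j) K J)"
    by (rule mdet_mult) auto
  also have "\<dots> = (\<Sum>K\<in>{K. card K = card I}. minor_det X I K * minor_det Y K J)"
    by (intro sum.cong refl) (simp add: minor_eq c)
  finally show ?thesis .
qed

theorem lemma4:
  fixes M :: "'w measure"
    and A B :: "'w \<Rightarrow> real^'d::{finite,linorder}^'d::{finite,linorder}"
  assumes "prob_space M"
    and "A \<in> borel_measurable M" and "B \<in> borel_measurable M"
    and "prob_space.indep_var M borel A borel B"
    and "det_preserving M A" and "det_preserving M B"
  shows "det_preserving M (\<lambda>\<omega>. A \<omega> + B \<omega>) \<and>
         det_preserving M (\<lambda>\<omega>. A \<omega> ** B \<omega>)"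
proof -
  interpret P: prob_space M by fact
  have ind: "P.indep_var borel A borel B" using assms(4) by simp
  define EA where "EA = mat_expectation M A"
  define EB where "EB = mat_expectation M B"
  have dA: "integrable M (\<lambda>\<omega>. minor_det (A \<omega>) I J) \<and> integral\<^sup>L M (\<lambda>\<omega>. minor_det (A \<omega>) I J) = minor_det EA I J"
    if "card I = card J" for I J using assms(5) that unfolding det_preserving_def EA_def by blast
  have dB: "integrable M (\<lambda>\<omega>. minor_det (B \<omega>) I J) \<and> integral\<^sup>L M (\<lambda>\<omega>. minor_det (B \<omega>) I J) = minor_det EB I J"
    if "card I = card J" for I J using assms(6) that unfolding det_preserving_def EB_def by blast
  have eA: "integrable M (\<lambda>\<omega>. A \<omega> $ i $ j)" for i j using dA[of "{i}" "{j}"] by (simp add: minor_single)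
  have eB: "integrable M (\<lambda>\<omega>. B \<omega> $ i $ j)" for i j using dB[of "{i}" "{j}"] by (simp add: minor_single)
  have EAe: "EA $ i $ j = integral\<^sup>L M (\<lambda>\<omega>. A \<omega> $ i $ j)" for i j by (simp add: EA_def mat_expectation_def)
  have EBe: "EB $ i $ j = integral\<^sup>L M (\<lambda>\<omega>. B \<omega> $ i $ j)" for i j by (simp add: EB_def mat_expectation_def)
  have prodAB: "integrable M (\<lambda>\<omega>. minor_det (A \<omega>) I1 J1 * minor_det (B \<omega>) I2 J2) \<and>
      integral\<^sup>L M (\<lambda>\<omega>. minor_det (A \<omega>) I1 J1 * minor_det (B \<omega>) I2 J2) = minor_det EA I1 J1 * minor_det EB I2 J2"
    if "card I1 = card J1" "card I2 = card J2" for I1 J1 I2 J2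
    using P.indep_prod[OF ind minor_meas[of I1 J1] minor_meas[of I2 J2]] dA[OF that(1)] dB[OF that(2)] by simp
  have sum: "det_preserving M (\<lambda>\<omega>. A \<omega> + B \<omega>)"
    unfolding det_preserving_def
  proof (intro allI impI)
    fix I J :: "'d set" assume c: "card I = card J"
    define H where "H \<omega> q = rho I (fst q) * rho J (snd q) *
            (minor_det (A \<omega>) (fst q) (snd q) * minor_det (B \<omega>) (I - fst q) (J - snd q))" for \<omega> q
    have pt: "minor_det (A \<omega> + B \<omega>) I J = (\<Sum>q\<in>QQ I J. H \<omega> q)" for \<omega>
      unfolding H_def by (rule minor_add_expand[OF c])
    have iH: "integrable M (\<lambda>\<omega>. H \<omega> q) \<and> integral\<^sup>L M (\<lambda>\<omega>. H \<omega> q) = rho I (fst q) * rho J (snd q) *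
            (minor_det EA (fst q) (snd q) * minor_det EB (I - fst q) (J - snd q))" if q: "q \<in> QQ I J" for q
      using prodAB[of "fst q" "snd q" "I - fst q" "J - snd q"] QQ_cards[OF c q] unfolding H_def by simp
    have Esum: "mat_expectation M (\<lambda>\<omega>. A \<omega> + B \<omega>) = EA + EB"
      unfolding mat_expectation_def by (simp add: vec_eq_iff EAe EBe eA eB)
    show "integrable M (\<lambda>\<omega>. minor_det (A \<omega> + B \<omega>) I J) \<and>
          integral\<^sup>L M (\<lambda>\<omega>. minor_det (A \<omega> + B \<omega>) I J) = minor_det (mat_expectation M (\<lambda>\<omega>. A \<omega> + B \<omega>)) I J"
    proof -
      have i1: "integrable M (\<lambda>\<omega>. \<Sum>q\<in>QQ I J. H \<omega> q)"
        by (rule Bochner_Integration.integrable_sum) (use iH in blast)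
      have i2: "integral\<^sup>L M (\<lambda>\<omega>. \<Sum>q\<in>QQ I J. H \<omega> q) = (\<Sum>q\<in>QQ I J. rho I (fst q) * rho J (snd q) *
            (minor_det EA (fst q) (snd q) * minor_det EB (I - fst q) (J - snd q)))"
        by (subst Bochner_Integration.integral_sum) (use iH in auto)
      show ?thesis unfolding pt Esum using i1 i2 minor_add_expand[OF c, of EA EB] by simp
    qed
  qed
  have mult: "det_preserving M (\<lambda>\<omega>. A \<omega> ** B \<omega>)"
    unfolding det_preserving_def
  proof (intro allI impI)
    fix I J :: "'d set" assume c: "card I = card J"
    have Emult: "mat_expectation M (\<lambda>\<omega>. A \<omega> ** B \<omega>) = EA ** EB"
    proof -
      have "integral\<^sup>L M (\<lambda>\<omega>. A \<omega> $ i $ l * B \<omega> $ l $ j) = EA $ i $ l * EB $ l $ j"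
       and "integrable M (\<lambda>\<omega>. A \<omega> $ i $ l * B \<omega> $ l $ j)" for i l j
        using P.indep_prod[OF ind entry_meas entry_meas eA eB] EAe EBe by auto
      thus ?thesis
        unfolding mat_expectation_def matrix_matrix_mult_def
        by (simp add: vec_eq_iff Bochner_Integration.integral_sum)
    qed
    show "integrable M (\<lambda>\<omega>. minor_det (A \<omega> ** B \<omega>) I J) \<and>
          integral\<^sup>L M (\<lambda>\<omega>. minor_det (A \<omega> ** B \<omega>) I J) = minor_det (mat_expectation M (\<lambda>\<omega>. A \<omega> ** B \<omega>)) I J"
    proof -
      have iK: "integrable M (\<lambda>\<omega>. minor_det (A \<omega>) I K * minor_det (B \<omega>) K J) \<and>
        integral\<^sup>L M (\<lambda>\<omega>. minor_det (A \<omega>) I K * minor_det (B \<omega>) K J) = minor_det EA I K * minor_det EB K J"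
        if "K \<in> {K. card K = card I}" for K using prodAB[of I K K J] that c by simp
      have i1: "integrable M (\<lambda>\<omega>. \<Sum>K\<in>{K. card K = card I}. minor_det (A \<omega>) I K * minor_det (B \<omega>) K J)"
        by (rule Bochner_Integration.integrable_sum) (use iK in blast)
      have i2: "integral\<^sup>L M (\<lambda>\<omega>. \<Sum>K\<in>{K. card K = card I}. minor_det (A \<omega>) I K * minor_det (B \<omega>) K J)
              = (\<Sum>K\<in>{K. card K = card I}. minor_det EA I K * minor_det EB K J)"
        by (subst Bochner_Integration.integral_sum) (use iK in auto)
      show ?thesis unfolding Emult minor_mult_expand[OF c] using i1 i2 by simp
    qed
  qed
  show ?thesis using sum mult by blast
qed


end
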